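(* Let $\{\xi_i;i\ge1\}$ be i.i.d. standard normal random variables and $S_k=\sum_{i=1}^k\xi_i^2$. Then $$P\left(\left|\frac{S_n}{S_m}-\frac{n}{m}\right|\ge x\right)\le 6\exp\left(-\frac{m^4x^2}{48n^3}\right)$$ for all integers $m\ge1$, $n\ge1$ and real $x>0$ satisfying $m\le n/2$ and $x\le n/m$. *)

theory Defs
  imports "HOL-Probability.Probability"
begin

definition sq_partial_sum :: "(nat \<Rightarrow> 'a \<Rightarrow> real) \<Rightarrow> nat \<Rightarrow> 'a \<Rightarrow> real" where
  "sq_partial_sum \<xi> k \<omega> = (\<Sum>i\<in>{1..k}. (\<xi> i \<omega>)\<^sup>2)"

end

theory Submission
  imports Defs
begin


lemma ln_lower_aux:
  fixes u :: real assumes "0 \<le> u" "u \<le> 1/2"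
  shows "-u - u^2 \<le> ln (1 - u)"
proof -
  define f where "f = (\<lambda>w::real. ln (1 - w) + w + w^2)"
  have d: "(f has_real_derivative (2*w + 1 - 1/(1-w))) (at w)" if "w < 1" for w
    unfolding f_def using that
    by (auto intro!: derivative_eq_intros simp: field_simps)
  have "f 0 \<le> f u"
  proof (rule DERIV_nonneg_imp_nondecreasing[of 0 u f])
    fix w assume w: "0 \<le> w" "w \<le> u"
    show "\<exists>y. (f has_real_derivative y) (at w) \<and> 0 \<le> y"
    proof (intro exI conjI)
      show "(f has_real_derivative (2*w + 1 - 1/(1-w))) (at w)" using d w assms by simp
      have "2*w + 1 - 1/(1-w) = w*(1-2*w)/(1-w)" using w assms by (simp add: field_simps)
      also have "\<dots> \<ge> 0" using w assms by (intro divide_nonneg_pos mult_nonneg_nonneg) auto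
      finally show "0 \<le> 2*w + 1 - 1/(1-w)" .
    qed
  qed (use assms in auto)
  thus ?thesis by (simp add: f_def)
qed

lemma scalar_bound:
  fixes l :: real assumes "\<bar>l\<bar> \<le> 1/4"
  shows "exp (-l) / sqrt (1 - 2*l) \<le> exp (2*l^2)"
proof -
  have c: "1 - 2*l > 0" using assms by auto
  have key: "-2*l - ln (1-2*l) \<le> 4*l^2"
  proof (cases "l \<ge> 0")
    case True
    have "-(2*l) - (2*l)^2 \<le> ln (1 - 2*l)" using ln_lower_aux[of "2*l"] True assms by auto
    thus ?thesis by (simp add: power2_eq_square)
  next
    case False
    have "(-2*l) - (-2*l)^2 \<le> ln (1 + (-2*l))" using ln_one_plus_pos_lower_bound[of "-2*l"] False assms by auto
    thus ?thesis by (simp add: power2_eq_square)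
  qed
  have "exp (-l) / sqrt (1 - 2*l) = exp (-l - ln (1-2*l)/2)"
    using c by (simp add: exp_diff exp_ln ln_sqrt[symmetric] del: ln_sqrt)
  also have "\<dots> \<le> exp (2*l^2)" using key by simp
  finally show ?thesis .
qed


lemma normal_identity:
  fixes l x :: real assumes c: "1 - 2*l > 0"
  shows "std_normal_density x * exp (l*(x^2-1)) =
    exp (-l) / sqrt (1 - 2*l) * normal_density 0 (1 / sqrt (1 - 2*l)) x"
proof -
  define c where "c = 1 - 2*l"
  have cp: "c > 0" using c by (simp add: c_def)
  have s2: "(1 / sqrt c)^2 = 1 / c" using cp by (simp add: power_divide)
  have "normal_density 0 (1 / sqrt c) x = sqrt c / sqrt (2*pi) * exp (- (x^2 * c) / 2)"
    unfolding normal_density_def s2 using cp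
    by (simp add: real_sqrt_divide field_simps)
  moreover have "exp (-l) * exp (- (x^2 * c) / 2) = exp (- (x^2) / 2) * exp (l*(x^2-1))"
    unfolding c_def mult_exp_exp by (rule arg_cong[where f=exp]) (simp add: field_simps)
  ultimately show ?thesis unfolding std_normal_density_def c_def[symmetric] using cp
    by (simp add: field_simps)
qed

lemma mgf_sq_normal:
  assumes "prob_space M" and X: "distributed M lborel X std_normal_density" and l: "\<bar>l\<bar> \<le> 1/4"
  shows "(\<integral>\<^sup>+\<omega>. ennreal (exp (l * ((X \<omega>)^2 - 1))) \<partial>M) \<le> ennreal (exp (2*l^2))"
proof -
  have c: "1 - 2*l > 0" using l by auto
  define C where "C = exp (-l) / sqrt (1 - 2*l)"
  have Cp: "C \<ge> 0" unfolding C_def using c by (intro divide_nonneg_nonneg) auto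
  have "(\<integral>\<^sup>+\<omega>. ennreal (exp (l * ((X \<omega>)^2 - 1))) \<partial>M)
      = (\<integral>\<^sup>+x. ennreal (std_normal_density x) * ennreal (exp (l * (x^2 - 1))) \<partial>lborel)"
    by (rule distributed_nn_integral[OF X, symmetric]) simp
  also have "\<dots> = (\<integral>\<^sup>+x. ennreal C * ennreal (normal_density 0 (1 / sqrt (1 - 2*l)) x) \<partial>lborel)"
    proof (intro nn_integral_cong)
      fix x :: real
      have "ennreal (std_normal_density x) * ennreal (exp (l * (x^2 - 1))) = ennreal (std_normal_density x * exp (l * (x^2 - 1)))"
        by (simp add: ennreal_mult)
      also have "\<dots> = ennreal (C * normal_density 0 (1 / sqrt (1 - 2*l)) x)"
        by (simp add: normal_identity[OF c] C_def)
      also have "\<dots> = ennreal C * ennreal (normal_density 0 (1 / sqrt (1 - 2*l)) x)"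
        using Cp by (simp add: ennreal_mult)
      finally show "ennreal (std_normal_density x) * ennreal (exp (l * (x^2 - 1))) = ennreal C * ennreal (normal_density 0 (1 / sqrt (1 - 2*l)) x)" .
    qed
  also have "\<dots> = ennreal C * (\<integral>\<^sup>+x. ennreal (normal_density 0 (1 / sqrt (1 - 2*l)) x) \<partial>lborel)"
    by (rule nn_integral_cmult) simp
  also have "(\<integral>\<^sup>+x. ennreal (normal_density 0 (1 / sqrt (1 - 2*l)) x) \<partial>lborel) = 1"
    using c by (subst nn_integral_eq_integral) (auto intro!: integrable_normal_density integral_normal_density)
  also have "ennreal C * 1 \<le> ennreal (exp (2*l^2))"
    using scalar_bound[OF l] by (simp add: C_def)
  finally show ?thesis .
qed


lemma meas_S:
  assumes "\<And>i. i \<ge> 1 \<Longrightarrow> distributed M lborel (\<xi> i) std_normal_density"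
  shows "sq_partial_sum \<xi> k \<in> borel_measurable M"
proof -
  have "\<And>i. i \<in> {1..k} \<Longrightarrow> \<xi> i \<in> borel_measurable M"
    using distributed_measurable[OF assms] by auto
  thus ?thesis unfolding sq_partial_sum_def[abs_def] by (intro borel_measurable_sum) auto
qed

lemma mgf_sum:
  assumes P: "prob_space M"
    and ind: "prob_space.indep_vars M (\<lambda>_. borel) \<xi> {1..}"
    and D: "\<And>i. i \<ge> 1 \<Longrightarrow> distributed M lborel (\<xi> i) std_normal_density"
    and l: "\<bar>l\<bar> \<le> 1/4"
  shows "(\<integral>\<^sup>+\<omega>. ennreal (exp (l * (sq_partial_sum \<xi> k \<omega> - real k))) \<partial>M) \<le> ennreal (exp (2 * real k * l^2))"
proof -
  interpret prob_space M by (rule P)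
  have eq: "exp (l * (sq_partial_sum \<xi> k \<omega> - real k)) = (\<Prod>i\<in>{1..k}. exp (l * ((\<xi> i \<omega>)^2 - 1)))" for \<omega>
  proof -
    have "l * (sq_partial_sum \<xi> k \<omega> - real k) = (\<Sum>i\<in>{1..k}. l * ((\<xi> i \<omega>)^2 - 1))"
      by (simp add: sq_partial_sum_def sum_subtractf sum_distrib_left[symmetric])
    thus ?thesis by (simp add: exp_sum)
  qed
  have "(\<integral>\<^sup>+\<omega>. ennreal (exp (l * (sq_partial_sum \<xi> k \<omega> - real k))) \<partial>M)
     = (\<integral>\<^sup>+\<omega>. (\<Prod>i\<in>{1..k}. ennreal (exp (l * ((\<xi> i \<omega>)^2 - 1)))) \<partial>M)"
    by (intro nn_integral_cong) (simp add: eq prod_ennreal)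
  also have "\<dots> = (\<Prod>i\<in>{1..k}. \<integral>\<^sup>+\<omega>. ennreal (exp (l * ((\<xi> i \<omega>)^2 - 1))) \<partial>M)"
  proof (rule indep_vars_nn_integral)
    show "indep_vars (\<lambda>_. borel) (\<lambda>i \<omega>. ennreal (exp (l * ((\<xi> i \<omega>)^2 - 1)))) {1..k}"
      by (rule indep_vars_compose2[where X=\<xi> and Y="\<lambda>i y. ennreal (exp (l * (y^2 - 1)))", OF indep_vars_subset[OF ind]]) auto
  qed auto
  also have "\<dots> \<le> (\<Prod>i\<in>{1..k}. ennreal (exp (2*l^2)))"
    by (intro prod_mono_ennreal mgf_sq_normal[OF P _ l] D) auto
  also have "\<dots> = ennreal (exp (2 * real k * l^2))"
    by (simp add: ennreal_power exp_of_nat_mult[symmetric] mult_ac)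
  finally show ?thesis .
qed

lemma chernoff_upper:
  assumes P: "prob_space M"
    and ind: "prob_space.indep_vars M (\<lambda>_. borel) \<xi> {1..}"
    and D: "\<And>i. i \<ge> 1 \<Longrightarrow> distributed M lborel (\<xi> i) std_normal_density"
    and s: "0 < s" "s \<le> 1/4" and c: "c = 1 \<or> c = -1"
  shows "measure M {\<omega>\<in>space M. c * (sq_partial_sum \<xi> k \<omega> - real k) \<ge> t}
     \<le> exp (- s * t + 2 * real k * s^2)"
proof -
  interpret prob_space M by (rule P)
  have [measurable]: "sq_partial_sum \<xi> k \<in> borel_measurable M" by (rule meas_S[OF D])
  have "emeasure M {\<omega>\<in>space M. c * (sq_partial_sum \<xi> k \<omega> - real k) \<ge> t}
     \<le> ennreal (exp (-s*t)) * nn_integral M (\<lambda>\<omega>. ennreal (exp (s * (c * (sq_partial_sum \<xi> k \<omega> - real k)))) * indicator (space M) \<omega>)"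
    by (rule Chernoff_ineq_nn_integral_ge[OF s(1)]) auto
  also have "nn_integral M (\<lambda>\<omega>. ennreal (exp (s * (c * (sq_partial_sum \<xi> k \<omega> - real k)))) * indicator (space M) \<omega>)
      = (\<integral>\<^sup>+\<omega>. ennreal (exp ((s*c) * (sq_partial_sum \<xi> k \<omega> - real k))) \<partial>M)"
    by (intro nn_integral_cong) (simp add: mult_ac)
  also have "\<dots> \<le> ennreal (exp (2 * real k * (s*c)^2))"
    by (rule mgf_sum[OF P ind D]) (use s c in auto)
  also have "(s*c)^2 = s^2" using c by (auto simp: power2_eq_square)
  also have "ennreal (exp (-s*t)) * ennreal (exp (2 * real k * s^2)) = ennreal (exp (- s * t + 2 * real k * s^2))"
    by (simp add: ennreal_mult[symmetric] mult_exp_exp)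
  finally show ?thesis by (simp add: emeasure_eq_measure mult_left_mono)
qed

lemma chi_tail:
  assumes P: "prob_space M"
    and ind: "prob_space.indep_vars M (\<lambda>_. borel) \<xi> {1..}"
    and D: "\<And>i. i \<ge> 1 \<Longrightarrow> distributed M lborel (\<xi> i) std_normal_density"
    and k: "k \<ge> 1" and t: "0 < t" "t \<le> real k"
  shows "measure M {\<omega>\<in>space M. \<bar>sq_partial_sum \<xi> k \<omega> - real k\<bar> \<ge> t} \<le> 2 * exp (- (t^2) / (8 * real k))"
proof -
  interpret prob_space M by (rule P)
  have [measurable]: "sq_partial_sum \<xi> k \<in> borel_measurable M" by (rule meas_S[OF D])
  define s where "s = t / (4 * real k)"
  have s: "0 < s" "s \<le> 1/4" using k t by (auto simp: s_def field_simps)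
  have e: "- s * t + 2 * real k * s^2 = - (t^2) / (8 * real k)"
    using k by (simp add: s_def field_simps power2_eq_square)
  have "{\<omega>\<in>space M. \<bar>sq_partial_sum \<xi> k \<omega> - real k\<bar> \<ge> t} =
        {\<omega>\<in>space M. 1 * (sq_partial_sum \<xi> k \<omega> - real k) \<ge> t} \<union> {\<omega>\<in>space M. (-1) * (sq_partial_sum \<xi> k \<omega> - real k) \<ge> t}"
    by auto
  also have "measure M \<dots> \<le> measure M {\<omega>\<in>space M. 1 * (sq_partial_sum \<xi> k \<omega> - real k) \<ge> t} + measure M {\<omega>\<in>space M. (-1) * (sq_partial_sum \<xi> k \<omega> - real k) \<ge> t}"
    by (intro measure_Un_le) auto
  also have "\<dots> \<le> exp (- s * t + 2 * real k * s^2) + exp (- s * t + 2 * real k * s^2)"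
    by (intro add_mono chernoff_upper[OF P ind D s]) auto
  finally show ?thesis unfolding e by simp
qed


lemma incl_aux:
  fixes a b mm nn x :: real
  assumes mm: "mm \<ge> 1" and nn: "2*mm \<le> nn" and x: "0 < x" "x \<le> nn/mm"
    and a: "\<bar>a - nn\<bar> < x*mm/4" and b: "\<bar>b - mm\<bar> < x*mm^2/(3*nn)"
  shows "\<bar>a / b - nn / mm\<bar> < x"
proof -
  have nnp: "nn > 0" using mm nn by auto
  have "x*mm \<le> nn" using x mm by (simp add: field_simps)
  hence "x*mm^2/(3*nn) \<le> mm/3" using nnp mm by (simp add: field_simps power2_eq_square)
  hence bl: "b \<ge> 2*mm/3" using b by linarith
  hence bp: "b > 0" using mm by auto
  have eq: "a / b - nn / mm = (mm*(a - nn) - nn*(b - mm)) / (mm*b)"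
    using bp mm by (simp add: field_simps)
  have "\<bar>mm*(a - nn) - nn*(b - mm)\<bar> \<le> mm*\<bar>a - nn\<bar> + nn*\<bar>b - mm\<bar>"
    using mm nnp by (simp add: abs_mult abs_triangle_ineq4[THEN order_trans])
  also have "\<dots> < mm*(x*mm/4) + nn*(x*mm^2/(3*nn))"
    using mm nnp a b by (intro add_strict_mono mult_strict_left_mono) auto
  also have "\<dots> = 7*x*mm^2/12" using nnp by (simp add: field_simps power2_eq_square)
  finally have num: "\<bar>mm*(a - nn) - nn*(b - mm)\<bar> < 7*x*mm^2/12" .
  have den: "mm*b \<ge> 2*mm^2/3" using bl mm by (simp add: power2_eq_square)
  have "\<bar>a / b - nn / mm\<bar> = \<bar>mm*(a - nn) - nn*(b - mm)\<bar> / (mm*b)"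
    using eq bp mm by (simp add: abs_divide)
  also have "\<dots> \<le> (7*x*mm^2/12) / (2*mm^2/3)"
    using num den mm bp x by (intro frac_le) auto
  also have "\<dots> = 7*x/8" using mm by (simp add: field_simps power2_eq_square)
  also have "\<dots> < x" using x by simp
  finally show ?thesis .
qed

theorem lemma4p2:
  fixes M :: "'a measure" and \<xi> :: "nat \<Rightarrow> 'a \<Rightarrow> real"
    and m n :: nat and x :: real
  assumes "prob_space M"
    and "prob_space.indep_vars M (\<lambda>_. borel) \<xi> {1..}"
    and "\<And>i. i \<ge> 1 \<Longrightarrow> distributed M lborel (\<xi> i) std_normal_density"
    and "m \<ge> 1" and "n \<ge> 1" and "x > 0"
    and "real m \<le> real n / 2" and "x \<le> real n / real m"
  shows "measure M {\<omega> \<in> space M.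
           \<bar>sq_partial_sum \<xi> n \<omega> / sq_partial_sum \<xi> m \<omega> - real n / real m\<bar> \<ge> x}
         \<le> 6 * exp (- ((real m)^4 * x\<^sup>2 / (48 * (real n)^3)))"
proof -
  note P = assms(1) and ind = assms(2) and D = assms(3)
  interpret prob_space M by (rule P)
  have [measurable]: "sq_partial_sum \<xi> k \<in> borel_measurable M" for k by (rule meas_S[OF D])
  define mm where "mm = real m"
  define nn where "nn = real n"
  have mm: "mm \<ge> 1" using assms(4) by (simp add: mm_def)
  have nn: "2*mm \<le> nn" using assms(7) by (simp add: mm_def nn_def)
  have nnp: "nn > 0" using mm nn by auto
  have x: "0 < x" "x \<le> nn/mm" using assms(6,8) by (auto simp: mm_def nn_def)
  define t where "t = x*mm/4"
  define s where "s = x*mm^2/(3*nn)"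
  define K where "K = mm^4 * x^2 / (48 * nn^3)"
  have xm: "x*mm \<le> nn" using x mm by (simp add: field_simps)
  have t: "0 < t" "t \<le> real n" using x mm xm by (auto simp: t_def nn_def)
  have "x*mm^2/(3*nn) \<le> mm/3" using xm nnp mm by (simp add: field_simps power2_eq_square)
  moreover have "0 < s" using x mm nnp by (simp add: s_def)
  ultimately have s: "0 < s" "s \<le> real m" using mm unfolding s_def mm_def by linarith+
  define A where "A = {\<omega>\<in>space M. \<bar>sq_partial_sum \<xi> n \<omega> - real n\<bar> \<ge> t}"
  define B where "B = {\<omega>\<in>space M. \<bar>sq_partial_sum \<xi> m \<omega> - real m\<bar> \<ge> s}"
  have sub: "{\<omega> \<in> space M. \<bar>sq_partial_sum \<xi> n \<omega> / sq_partial_sum \<xi> m \<omega> - real n / real m\<bar> \<ge> x} \<subseteq> A \<union> B"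
  proof
    fix \<omega> assume w: "\<omega> \<in> {\<omega> \<in> space M. \<bar>sq_partial_sum \<xi> n \<omega> / sq_partial_sum \<xi> m \<omega> - real n / real m\<bar> \<ge> x}"
    show "\<omega> \<in> A \<union> B"
    proof (rule ccontr)
      assume "\<omega> \<notin> A \<union> B"
      hence "\<bar>sq_partial_sum \<xi> n \<omega> - nn\<bar> < x*mm/4" "\<bar>sq_partial_sum \<xi> m \<omega> - mm\<bar> < x*mm^2/(3*nn)"
        using w by (auto simp: A_def B_def t_def s_def mm_def nn_def)
      from incl_aux[OF mm nn x this] w show False by (auto simp: mm_def nn_def)
    qed
  qed
  have "measure M {\<omega> \<in> space M. \<bar>sq_partial_sum \<xi> n \<omega> / sq_partial_sum \<xi> m \<omega> - real n / real m\<bar> \<ge> x}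
      \<le> measure M (A \<union> B)"
    by (intro finite_measure_mono[OF sub]) (auto simp: A_def B_def)
  also have "\<dots> \<le> measure M A + measure M B"
    by (intro measure_Un_le) (auto simp: A_def B_def)
  also have "\<dots> \<le> 2 * exp (- (t^2) / (8 * real n)) + 2 * exp (- (s^2) / (8 * real m))"
    unfolding A_def B_def
    by (intro add_mono chi_tail[OF P ind D] assms t s)
  also have "\<dots> \<le> 2 * exp (- K) + 2 * exp (- K)"
  proof (intro add_mono mult_left_mono) 
    have "K = (x^2*mm^2/(128*nn)) * (128*mm^2/(48*nn^2))"
      using nnp by (simp add: K_def field_simps eval_nat_numeral)
    also have "\<dots> \<le> (x^2*mm^2/(128*nn)) * 1"
    proof (intro mult_left_mono)
      have sq: "(2*mm)^2 \<le> nn^2" using nn mm by (intro power_mono) auto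
      hence "4*mm^2 \<le> nn^2" by (simp add: power_mult_distrib)
      moreover have "0 \<le> nn^2" by simp
      ultimately have "8*mm^2 \<le> 3*nn^2" by linarith
      thus "128*mm^2/(48*nn^2) \<le> 1" using nnp by (simp add: field_simps power_mult_distrib)
    qed (use nnp in auto)
    finally have "K \<le> t^2 / (8 * real n)" by (simp add: t_def nn_def power2_eq_square field_simps)
    thus "exp (- (t^2) / (8 * real n)) \<le> exp (- K)" by simp
    have "K = (x^2*mm^3/(72*nn^2)) * (72*mm/(48*nn))"
      using nnp mm by (simp add: K_def field_simps eval_nat_numeral)
    also have "\<dots> \<le> (x^2*mm^3/(72*nn^2)) * 1"
      using nn mm nnp by (intro mult_left_mono) (auto simp: field_simps)
    finally have "K \<le> s^2 / (8 * real m)" using mm by (simp add: s_def mm_def power2_eq_square field_simps eval_nat_numeral)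
    thus "exp (- (s^2) / (8 * real m)) \<le> exp (- K)" by simp
  qed auto
  also have "\<dots> \<le> 6 * exp (- K)" by simp
  finally show ?thesis by (simp add: K_def mm_def nn_def)
qed

end
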